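(* Assume the standing hypotheses, with $q>4$ the moment exponent of $\theta$, and let $\varepsilon>0$. Under $\mathbf P^{(\mathcal T_\infty)}$, and also under $\mathbf P^{(\mathcal T^*_\infty)}$, the probability of the event $$\max_{0\le i\le n}\ \mathrm d\big(V(\varnothing_i),\{V(u):u\in U_n\}\big)\le n^{\frac1q+\varepsilon}$$ tends to $1$ as $n\to\infty$, where $U_n$ is the set of non-spine vertices belonging to the subtrees hanging off $\varnothing_0,\dots,\varnothing_n$ (i.e. non-spine vertices which are descendants of some $\varnothing_j$, $j\le n$, but not of $\varnothing_{n+1}$).
   Context: Standing hypotheses: $\theta$ symmetric probability on $\mathbb Z^d$, not supported by a strict subgroup, $\mathbb E|X|^q<\infty$ for some fixed $q>4$; $(p_i)$ offspring distribution with $\sum ip_i=1$, $\sigma_p^2=\sum i^2p_i-1\in(0,\infty)$; $\mathcal T$ the Galton–Watson tree with offspring $(p_i)$. $\mathcal T_\infty$: spine $\varnothing_0,\varnothing_1,\dots$ where independently each $\varnothing_k$ has $K_k$ additional children, $\mathbb P(K_k=j)=\sum_{i\ge j+1}p_i$, each the root of an independent copy of $\mathcal T$, and $\varnothing_{k+1}$ is the last child of $\varnothing_k$. $\mathcal T^*_\infty$: same, except that $\varnothing_0$ is the root of an independent copy of $\mathcal T$ (with $\varnothing_1$ appended as last child). $V$ is the BRW with i.i.d. $\theta$ increments on all edges, $V(\varnothing_0)=0$; $\mathrm d$ is Euclidean distance to a set. *)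

theory Defs
  imports "HOL-Probability.Probability"
begin

text \<open>Index type: Inl k refers to spine vertex k (its number of extra children K_k,
and the increment of the spine edge from k to k+1);
Inr (k,j,w) refers to the vertex with Ulam--Harris word w in the
Galton--Watson subtree rooted at the j-th extra child of spine vertex k
(its offspring number, and the increment on the edge from its parent).\<close>

type_synonym idx = "nat + (nat \<times> nat \<times> nat list)"

definition offspring_law :: "nat pmf \<Rightarrow> nat pmf \<Rightarrow> nat pmf \<Rightarrow> idx \<Rightarrow> nat pmf" where
  "offspring_law L0 Kl p i = (case i of Inl k \<Rightarrow> (if k = 0 then L0 else Kl) | Inr _ \<Rightarrow> p)"

text \<open>The probability space: all offspring numbers and all increments independent.
L0 is the law of K_0 (Kl for T_infinity, p for T*_infinity).\<close>
definition brw_space :: "nat pmf \<Rightarrow> nat pmf \<Rightarrow> nat pmf \<Rightarrow> (int ^ 'd) pmf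
    \<Rightarrow> ((idx \<Rightarrow> nat) \<times> (idx \<Rightarrow> int ^ 'd)) measure" where
  "brw_space L0 Kl p \<theta> =
     (PiM UNIV (\<lambda>i. measure_pmf (offspring_law L0 Kl p i))) \<Otimes>\<^sub>M (PiM UNIV (\<lambda>i. measure_pmf \<theta>))"

definition spine_pos :: "(idx \<Rightarrow> int ^ 'd) \<Rightarrow> nat \<Rightarrow> int ^ 'd" where
  "spine_pos Y i = (\<Sum>k<i. Y (Inl k))"

definition in_subtree :: "(idx \<Rightarrow> nat) \<Rightarrow> nat \<Rightarrow> nat \<Rightarrow> nat list \<Rightarrow> bool" where
  "in_subtree N k j w \<longleftrightarrow> j < N (Inl k) \<and> (\<forall>m<length w. w ! m < N (Inr (k, j, take m w)))"

definition node_pos :: "(idx \<Rightarrow> int ^ 'd) \<Rightarrow> nat \<Rightarrow> nat \<Rightarrow> nat list \<Rightarrow> int ^ 'd" where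
  "node_pos Y k j w = spine_pos Y k + (\<Sum>m\<le>length w. Y (Inr (k, j, take m w)))"

definition U_pos :: "(idx \<Rightarrow> nat) \<times> (idx \<Rightarrow> int ^ 'd) \<Rightarrow> nat \<Rightarrow> (int ^ 'd) set" where
  "U_pos \<omega> n = {node_pos (snd \<omega>) k j w | k j w. k \<le> n \<and> in_subtree (fst \<omega>) k j w}"

definition zvec :: "int ^ 'd \<Rightarrow> real ^ 'd" where
  "zvec x = (\<chi> i. real_of_int (x $ i))"

text \<open>The event; distance to the empty set is +infinity, so nonemptiness is required.\<close>
definition good_event :: "nat \<Rightarrow> real \<Rightarrow> real \<Rightarrow> ((idx \<Rightarrow> nat) \<times> (idx \<Rightarrow> int ^ 'd)) set" where
  "good_event n \<epsilon> q = {\<omega>. U_pos \<omega> n \<noteq> {} \<and>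
      (\<forall>i\<le>n. infdist (zvec (spine_pos (snd \<omega>) i)) (zvec ` U_pos \<omega> n) \<le> real n powr (1 / q + \<epsilon>))}"

end

theory Submission imports Defs "HOL-Real_Asymp.Real_Asymp" begin

lemma space_brw: "space (brw_space L0 Kl p \<theta>) = UNIV"
  by (simp add: brw_space_def space_pair_measure space_PiM PiE_UNIV_domain)

lemma meas_N: "(\<lambda>\<omega>. fst \<omega> i) \<in> measurable (brw_space L0 Kl p \<theta>) (count_space UNIV)"
proof -
  have "(\<lambda>\<omega>. \<omega> i) \<in> measurable (PiM UNIV (\<lambda>i. measure_pmf (offspring_law L0 Kl p i))) (measure_pmf (offspring_law L0 Kl p i))"
    by (rule measurable_component_singleton) simp
  then have "(\<lambda>\<omega>. \<omega> i) \<in> measurable (PiM UNIV (\<lambda>i. measure_pmf (offspring_law L0 Kl p i))) (count_space UNIV)"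
    by simp
  then show ?thesis unfolding brw_space_def by measurable
qed

lemma meas_Y: "(\<lambda>\<omega>. snd \<omega> i) \<in> measurable (brw_space L0 Kl p \<theta>) (count_space UNIV)"
proof -
  have "(\<lambda>\<omega>. \<omega> i) \<in> measurable (PiM UNIV (\<lambda>i. measure_pmf \<theta>)) (measure_pmf \<theta>)"
    by (rule measurable_component_singleton) simp
  then have "(\<lambda>\<omega>. \<omega> i) \<in> measurable (PiM UNIV (\<lambda>i. measure_pmf \<theta>)) (count_space UNIV)"
    by simp
  then show ?thesis unfolding brw_space_def by measurable
qed

lemma prob_brw: "prob_space (brw_space L0 Kl p \<theta>)"
  unfolding brw_space_def
  by (intro prob_space_pair prob_space_PiM) (auto intro: prob_space_measure_pmf)

lemma zvec_add: "zvec (a + b) = zvec a + zvec b"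
  by (simp add: zvec_def vec_eq_iff)
lemma zvec_diff: "zvec (a - b) = zvec a - zvec b"
  by (simp add: zvec_def vec_eq_iff)
lemma zvec_sum: "zvec (sum f A) = (\<Sum>x\<in>A. zvec (f x))"
  by (induction A rule: infinite_finite_induct) (auto simp: zvec_add, simp_all add: zvec_def vec_eq_iff)

lemma meas_zY: "(\<lambda>\<omega>. zvec (snd \<omega> i)) \<in> borel_measurable (brw_space L0 Kl p \<theta>)"
  using measurable_compose[OF meas_Y, of zvec borel] by simp

lemma meas_spine: "(\<lambda>\<omega>. zvec (spine_pos (snd \<omega>) i)) \<in> borel_measurable (brw_space L0 Kl p \<theta>)"
  unfolding spine_pos_def zvec_sum by (intro borel_measurable_sum meas_zY)

lemma meas_node: "(\<lambda>\<omega>. zvec (node_pos (snd \<omega>) k j w)) \<in> borel_measurable (brw_space L0 Kl p \<theta>)"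
  unfolding node_pos_def zvec_sum zvec_add by (intro borel_measurable_add borel_measurable_sum meas_zY meas_spine)

lemma pred_sub: "{\<omega>. in_subtree (fst \<omega>) k j w} \<in> sets (brw_space L0 Kl p \<theta>)"
proof -
  have "{\<omega>. in_subtree (fst \<omega>) k j w} = {\<omega> \<in> space (brw_space L0 Kl p \<theta>). j < fst \<omega> (Inl k) \<and> (\<forall>m\<in>{..<length w}. w ! m < fst \<omega> (Inr (k, j, take m w)))}"
    by (auto simp: space_brw in_subtree_def)
  also have "\<dots> \<in> sets (brw_space L0 Kl p \<theta>)"
    using meas_N[of _ L0 Kl p \<theta>] by measurable
  finally show ?thesis .
qed

lemma infdist_char: "(S \<noteq> {} \<and> infdist x S \<le> c) \<longleftrightarrow> (\<forall>m::nat. \<exists>s\<in>S. dist x s < c + 1 / (real m + 1))"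
proof
  assume a: "S \<noteq> {} \<and> infdist x S \<le> c"
  show "\<forall>m::nat. \<exists>s\<in>S. dist x s < c + 1 / (real m + 1)"
  proof
    fix m :: nat
    have "(INF a\<in>S. dist x a) < c + 1 / (real m + 1)"
      using a infdist_notempty[of S x] by (smt (verit) divide_pos_pos of_nat_0_le_iff)
    then show "\<exists>s\<in>S. dist x s < c + 1 / (real m + 1)"
      by (subst (asm) cINF_less_iff) (auto intro: bdd_belowI[of _ 0] simp: a)
  qed
next
  assume b: "\<forall>m::nat. \<exists>s\<in>S. dist x s < c + 1 / (real m + 1)"
  then have ne: "S \<noteq> {}" by blast
  show "S \<noteq> {} \<and> infdist x S \<le> c"
  proof (rule ccontr)
    assume "\<not> ?thesis"
    then have gt: "infdist x S > c" using ne by auto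
    obtain m :: nat where m: "inverse (real (Suc m)) < infdist x S - c"
      using gt reals_Archimedean[of "infdist x S - c"] by auto
    obtain s where "s \<in> S" "dist x s < c + 1 / (real m + 1)" using b by blast
    then have "infdist x S < c + 1 / (real m + 1)" using infdist_le[of s S x] by linarith
    with m show False by (simp add: inverse_eq_divide add.commute)
  qed
qed

lemma dist_set: "{\<omega> \<in> space (brw_space L0 Kl p \<theta>). P \<and> dist (zvec (spine_pos (snd \<omega>) i)) (zvec (node_pos (snd \<omega>) k j w)) < r} \<in> sets (brw_space L0 Kl p \<theta>)"
  using meas_spine[of i L0 Kl p \<theta>] meas_node[of k j w L0 Kl p \<theta>] by measurable

lemma UNIV_brw: "UNIV \<in> sets (brw_space L0 Kl p \<theta>)"
  using sets.top[of "brw_space L0 Kl p \<theta>"] by (simp add: space_brw)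

lemma good_meas: "good_event n \<epsilon> q \<in> sets (brw_space L0 Kl p \<theta>)"
proof -
  define c where "c = real n powr (1 / q + \<epsilon>)"
  define M where "M = brw_space L0 Kl p \<theta>"
  have "good_event n \<epsilon> q = (\<Inter>i\<in>{..n}. \<Inter>m\<in>(UNIV::nat set). \<Union>t\<in>(UNIV :: (nat \<times> nat \<times> nat list) set).
     {\<omega>. in_subtree (fst \<omega>) (fst t) (fst (snd t)) (snd (snd t))} \<inter>
     {\<omega> \<in> space M. fst t \<le> n \<and> dist (zvec (spine_pos (snd \<omega>) i)) (zvec (node_pos (snd \<omega>) (fst t) (fst (snd t)) (snd (snd t)))) < c + 1 / (real m + 1)})" (is "_ = ?rhs")
  proof -
    have "good_event n \<epsilon> q = {\<omega>. \<forall>i\<le>n. U_pos \<omega> n \<noteq> {} \<and> infdist (zvec (spine_pos (snd \<omega>) i)) (zvec ` U_pos \<omega> n) \<le> c}"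
      unfolding good_event_def c_def by auto
    also have "\<dots> = {\<omega>. \<forall>i\<le>n. \<forall>m::nat. \<exists>s\<in>zvec ` U_pos \<omega> n. dist (zvec (spine_pos (snd \<omega>) i)) s < c + 1 / (real m + 1)}"
      by (subst infdist_char[symmetric]) auto
    also have "\<dots> = ?rhs"
      unfolding U_pos_def by (auto simp: M_def space_brw; blast)
    finally show ?thesis .
  qed
  also have "\<dots> \<in> sets M"
    unfolding M_def
    by (intro sets.countable_INT'' sets.countable_UN sets.Int pred_sub) (auto intro: UNIV_brw intro!: sets.Int pred_sub dist_set)
  finally show ?thesis by (simp add: M_def)
qed

lemma meas_pair_fst:
  assumes "prob_space M2" "A \<in> sets M1"
  shows "measure (M1 \<Otimes>\<^sub>M M2) (A \<times> space M2) = measure M1 A"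
proof -
  interpret M2: prob_space M2 by fact
  have "emeasure (M1 \<Otimes>\<^sub>M M2) (A \<times> space M2) = emeasure M1 A * emeasure M2 (space M2)"
    using assms(2) by (intro M2.emeasure_pair_measure_Times) auto
  then show ?thesis by (simp add: measure_def M2.emeasure_space_1)
qed

lemma meas_pair_snd:
  assumes "prob_space M1" "prob_space M2" "B \<in> sets M2"
  shows "measure (M1 \<Otimes>\<^sub>M M2) (space M1 \<times> B) = measure M2 B"
proof -
  interpret M1: prob_space M1 by fact
  interpret M2: prob_space M2 by fact
  have "emeasure (M1 \<Otimes>\<^sub>M M2) (space M1 \<times> B) = emeasure M1 (space M1) * emeasure M2 B"
    using assms(3) by (intro M2.emeasure_pair_measure_Times) auto
  then show ?thesis by (simp add: measure_def M1.emeasure_space_1)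
qed

lemma zero_win:
  assumes "finite J"
  shows "measure (PiM UNIV (\<lambda>i. measure_pmf (offspring_law L0 Kl p i))) {x. \<forall>k\<in>J. x (Inl k) = 0}
     = (\<Prod>k\<in>J. pmf (offspring_law L0 Kl p (Inl k)) 0)"
proof -
  let ?M = "\<lambda>i. measure_pmf (offspring_law L0 Kl p i)"
  have e: "prod_emb UNIV ?M (Inl ` J) (PiE (Inl ` J) (\<lambda>_. {0})) = {x. \<forall>k\<in>J. x (Inl k) = 0}"
    by (auto simp: prod_emb_def space_PiM PiE_UNIV_domain fun_eq_iff restrict_def split: if_splits)
  have "emeasure (PiM UNIV ?M) (prod_emb UNIV ?M (Inl ` J) (PiE (Inl ` J) (\<lambda>_. {0})))
      = (\<Prod>i\<in>Inl ` J. emeasure (?M i) {0})"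
    using assms by (intro emeasure_PiM_emb) (auto intro: prob_space_measure_pmf)
  also have "\<dots> = (\<Prod>k\<in>J. ennreal (pmf (offspring_law L0 Kl p (Inl k)) 0))"
    by (subst prod.reindex) (auto simp: emeasure_pmf_single)
  also have "\<dots> = ennreal (\<Prod>k\<in>J. pmf (offspring_law L0 Kl p (Inl k)) 0)"
    by (simp add: prod_ennreal)
  finally show ?thesis unfolding e measure_def by (simp add: prod_nonneg)
qed

lemma single_Y:
  shows "measure (PiM UNIV (\<lambda>i. measure_pmf \<theta>)) {y. y a \<in> B} = measure_pmf.prob \<theta> B"
proof -
  let ?M = "\<lambda>i. measure_pmf \<theta>"
  have e: "prod_emb UNIV ?M {a} (PiE {a} (\<lambda>_. B)) = {y. y a \<in> B}"
    by (auto simp: prod_emb_def space_PiM PiE_UNIV_domain)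
  have "emeasure (PiM UNIV ?M) (prod_emb UNIV ?M {a} (PiE {a} (\<lambda>_. B))) = emeasure (measure_pmf \<theta>) B"
    using emeasure_PiM_emb[of UNIV ?M "{a}" "\<lambda>_. B"] by (auto intro: prob_space_measure_pmf)
  then show ?thesis unfolding e measure_def by simp
qed

lemma markov_theta:
  fixes \<theta> :: "(int ^ 'd) pmf"
  assumes mom: "integrable (measure_pmf \<theta>) (\<lambda>x. norm (zvec x) powr q)" and q: "q > 0" and c: "c > 0"
  shows "measure_pmf.prob \<theta> {x. c \<le> norm (zvec x)} \<le> measure_pmf.expectation \<theta> (\<lambda>x. norm (zvec x) powr q) / c powr q"
proof -
  have "{x. c \<le> norm (zvec x)} \<subseteq> {x \<in> space (measure_pmf \<theta>). c powr q \<le> norm (zvec x) powr q}"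
    using c q by (auto intro: powr_mono2)
  then have "measure_pmf.prob \<theta> {x. c \<le> norm (zvec x)} \<le> measure_pmf.prob \<theta> {x \<in> space (measure_pmf \<theta>). c powr q \<le> norm (zvec x) powr q}"
    by (intro measure_pmf.finite_measure_mono) auto
  also have "\<dots> \<le> measure_pmf.expectation \<theta> (\<lambda>x. norm (zvec x) powr q) / c powr q"
    using mom c by (intro integral_Markov_inequality_measure) auto
  finally show ?thesis .
qed

lemma spine_diff: "a \<le> b \<Longrightarrow> zvec (spine_pos Y b) - zvec (spine_pos Y a) = (\<Sum>m\<in>{a..<b}. zvec (Y (Inl m)))"
  unfolding spine_pos_def zvec_sum lessThan_atLeast0
  by (metis (no_types, lifting) add_diff_cancel_left' le0 sum.atLeastLessThan_concat)

lemma seg_bound: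
  assumes "a \<le> b" "b \<le> n" and H2: "\<forall>m<n. norm (zvec (Y (Inl m))) < Mx"
  shows "norm (zvec (spine_pos Y b) - zvec (spine_pos Y a)) \<le> real (b - a) * Mx"
proof -
  have "norm (zvec (spine_pos Y b) - zvec (spine_pos Y a)) \<le> (\<Sum>m\<in>{a..<b}. norm (zvec (Y (Inl m))))"
    unfolding spine_diff[OF assms(1)] by (rule norm_sum)
  also have "\<dots> \<le> (\<Sum>m\<in>{a..<b}. Mx)"
    using H2 assms(2) by (intro sum_mono) (auto intro: less_imp_le)
  finally show ?thesis by simp
qed

lemma det:
  assumes Ln: "L \<le> n"
    and H1: "\<forall>i\<le>n. \<exists>k. min i (n-L) \<le> k \<and> k \<le> min i (n-L) + L \<and> fst \<omega> (Inl k) \<noteq> 0"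
    and H2: "\<forall>m<n. norm (zvec (snd \<omega> (Inl m))) < Mx"
    and H3: "\<forall>k\<le>n. norm (zvec (snd \<omega> (Inr (k,0,[])))) < Mx"
    and c: "(real L + 1) * Mx \<le> real n powr (1/q+\<epsilon>)"
  shows "\<omega> \<in> good_event n \<epsilon> q"
proof -
  let ?Y = "snd \<omega>"
  have key: "\<exists>s\<in>U_pos \<omega> n. dist (zvec (spine_pos ?Y i)) (zvec s) \<le> real n powr (1/q+\<epsilon>)" if i: "i \<le> n" for i
  proof -
    obtain k where k: "min i (n-L) \<le> k" "k \<le> min i (n-L) + L" "fst \<omega> (Inl k) \<noteq> 0"
      using H1 i by blast
    have kn: "k \<le> n" using k Ln by linarith
    have sub: "in_subtree (fst \<omega>) k 0 []" using k(3) by (simp add: in_subtree_def)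
    have mem: "node_pos ?Y k 0 [] \<in> U_pos \<omega> n"
      unfolding U_pos_def using kn sub by blast
    have np: "zvec (node_pos ?Y k 0 []) = zvec (spine_pos ?Y k) + zvec (?Y (Inr (k, 0, [])))"
      by (simp add: node_pos_def zvec_add)
    have seg: "norm (zvec (spine_pos ?Y i) - zvec (spine_pos ?Y k)) \<le> real L * Mx"
    proof (cases "i \<le> k")
      case True
      have "norm (zvec (spine_pos ?Y i) - zvec (spine_pos ?Y k)) = norm (zvec (spine_pos ?Y k) - zvec (spine_pos ?Y i))"
        by (simp add: norm_minus_commute)
      also have "\<dots> \<le> real (k - i) * Mx" using True kn H2 by (intro seg_bound) auto
      also have "\<dots> \<le> real L * Mx"
        using k True H3 kn by (intro mult_right_mono) (force, smt (verit) norm_ge_zero)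
      finally show ?thesis .
    next
      case False
      have "norm (zvec (spine_pos ?Y i) - zvec (spine_pos ?Y k)) \<le> real (i - k) * Mx" using False i H2 by (intro seg_bound) auto
      also have "\<dots> \<le> real L * Mx"
        using k False H3 kn i by (intro mult_right_mono) (force, smt (verit) norm_ge_zero)
      finally show ?thesis .
    qed
    have "dist (zvec (spine_pos ?Y i)) (zvec (node_pos ?Y k 0 [])) 
        = norm ((zvec (spine_pos ?Y i) - zvec (spine_pos ?Y k)) - zvec (?Y (Inr (k, 0, []))))"
      unfolding np dist_norm by (simp add: algebra_simps)
    also have "\<dots> \<le> norm (zvec (spine_pos ?Y i) - zvec (spine_pos ?Y k)) + norm (zvec (?Y (Inr (k, 0, []))))"
      by (rule norm_triangle_ineq4)
    also have "\<dots> \<le> real L * Mx + Mx" using seg H3 kn by (smt (verit))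
    also have "\<dots> \<le> real n powr (1/q+\<epsilon>)" using c by (simp add: algebra_simps)
    finally show ?thesis using mem by blast
  qed
  show ?thesis
    unfolding good_event_def
  proof (intro CollectI conjI allI impI)
    show "U_pos \<omega> n \<noteq> {}" using key[of 0] by auto
    fix i assume "i \<le> n"
    then obtain s where "s \<in> U_pos \<omega> n" "dist (zvec (spine_pos ?Y i)) (zvec s) \<le> real n powr (1/q+\<epsilon>)"
      using key by blast
    then show "infdist (zvec (spine_pos ?Y i)) (zvec ` U_pos \<omega> n) \<le> real n powr (1/q+\<epsilon>)"
      by (intro infdist_le2) auto
  qed
qed

lemma comp1: "(\<lambda>x. x i) \<in> measurable (PiM UNIV (\<lambda>i. measure_pmf (offspring_law L0 Kl p i))) (count_space UNIV)"
proof -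
  have "(\<lambda>x. x i) \<in> measurable (PiM UNIV (\<lambda>i. measure_pmf (offspring_law L0 Kl p i))) (measure_pmf (offspring_law L0 Kl p i))"
    by (rule measurable_component_singleton) simp
  then show ?thesis by simp
qed

lemma comp2: "(\<lambda>x. x i) \<in> measurable (PiM UNIV (\<lambda>i. measure_pmf \<theta>)) (count_space UNIV)"
proof -
  have "(\<lambda>x. x i) \<in> measurable (PiM UNIV (\<lambda>i. measure_pmf \<theta>)) (measure_pmf \<theta>)"
    by (rule measurable_component_singleton) simp
  then show ?thesis by simp
qed

lemma win_prob:
  assumes b: "\<forall>k. pmf (offspring_law L0 Kl p (Inl k)) 0 \<le> b"
  shows "measure (brw_space L0 Kl p \<theta>) {\<omega>. \<forall>k\<in>{a..a+L}. fst \<omega> (Inl k) = 0} \<le> b ^ (L+1)"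
proof -
  let ?M1 = "PiM UNIV (\<lambda>i. measure_pmf (offspring_law L0 Kl p i))"
  let ?M2 = "PiM UNIV (\<lambda>i. measure_pmf \<theta>)"
  let ?A = "{x. \<forall>k\<in>{a..a+L}. x (Inl k) = 0}"
  have sp2: "space ?M2 = UNIV" by (simp add: space_PiM PiE_UNIV_domain)
  have sp1: "space ?M1 = UNIV" by (simp add: space_PiM PiE_UNIV_domain)
  have A: "?A \<in> sets ?M1"
  proof -
    have "{x \<in> space ?M1. \<forall>k\<in>{a..a+L}. x (Inl k) = 0} \<in> sets ?M1"
      using comp1[of _ L0 Kl p] by measurable
    then show ?thesis by (simp add: sp1)
  qed
  have e: "{\<omega>. \<forall>k\<in>{a..a+L}. fst \<omega> (Inl k) = 0} = ?A \<times> space ?M2" by (auto simp: sp2)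
  have "measure (brw_space L0 Kl p \<theta>) {\<omega>. \<forall>k\<in>{a..a+L}. fst \<omega> (Inl k) = 0} = measure ?M1 ?A"
    unfolding brw_space_def e using A
    by (intro meas_pair_fst prob_space_PiM prob_space_measure_pmf)
  also have "\<dots> = (\<Prod>k\<in>{a..a+L}. pmf (offspring_law L0 Kl p (Inl k)) 0)"
    by (rule zero_win) simp
  also have "\<dots> \<le> (\<Prod>k\<in>{a..a+L}. b)"
    using b by (intro prod_mono) auto
  finally show ?thesis by simp
qed

lemma Y_prob:
  shows "measure (brw_space L0 Kl p \<theta>) {\<omega>. c \<le> norm (zvec (snd \<omega> a))} = measure_pmf.prob \<theta> {x. c \<le> norm (zvec x)}"
proof -
  let ?M1 = "PiM UNIV (\<lambda>i. measure_pmf (offspring_law L0 Kl p i))"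
  let ?M2 = "PiM UNIV (\<lambda>i. measure_pmf \<theta>)"
  let ?B = "{y. y a \<in> {x. c \<le> norm (zvec x)}}"
  have sp2: "space ?M2 = UNIV" by (simp add: space_PiM PiE_UNIV_domain)
  have sp1: "space ?M1 = UNIV" by (simp add: space_PiM PiE_UNIV_domain)
  have B: "?B \<in> sets ?M2"
  proof -
    have "{y \<in> space ?M2. y a \<in> {x. c \<le> norm (zvec x)}} \<in> sets ?M2"
      using comp2[of a \<theta>] by measurable
    then show ?thesis by (simp add: sp2)
  qed
  have e: "{\<omega>. c \<le> norm (zvec (snd \<omega> a))} = space ?M1 \<times> ?B" by (auto simp: sp1)
  have "measure (brw_space L0 Kl p \<theta>) {\<omega>. c \<le> norm (zvec (snd \<omega> a))} = measure ?M2 ?B"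
    unfolding brw_space_def e using B
    by (intro meas_pair_snd prob_space_PiM prob_space_measure_pmf)
  also have "\<dots> = measure_pmf.prob \<theta> {x. c \<le> norm (zvec x)}" by (rule single_Y)
  finally show ?thesis .
qed

lemma prob_bound:
  fixes \<theta> :: "(int ^ 'd) pmf"
  assumes b: "\<forall>k. pmf (offspring_law L0 Kl p (Inl k)) 0 \<le> b"
    and mom: "integrable (measure_pmf \<theta>) (\<lambda>x. norm (zvec x) powr q)" and q: "q > 0"
    and Mx: "Mx > 0" and Ln: "L \<le> n" and c: "(real L + 1) * Mx \<le> real n powr (1/q+\<epsilon>)"
  shows "1 - measure (brw_space L0 Kl p \<theta>) (good_event n \<epsilon> q)
     \<le> real (n+1) * b ^ (L+1) + real (2*n+1) * (measure_pmf.expectation \<theta> (\<lambda>x. norm (zvec x) powr q) / Mx powr q)"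
proof -
  define M where "M = brw_space L0 Kl p \<theta>"
  interpret prob_space M unfolding M_def by (rule prob_brw)
  define E where "E = measure_pmf.expectation \<theta> (\<lambda>x. norm (zvec x) powr q) / Mx powr q"
  define W :: "nat \<Rightarrow> ((idx \<Rightarrow> nat) \<times> (idx \<Rightarrow> int ^ 'd)) set" where "W = (\<lambda>i. {\<omega>. \<forall>k\<in>{min i (n-L)..min i (n-L)+L}. fst \<omega> (Inl k) = (0::nat)})"
  define Y :: "idx \<Rightarrow> ((idx \<Rightarrow> nat) \<times> (idx \<Rightarrow> int ^ 'd)) set" where "Y = (\<lambda>a. {\<omega>. Mx \<le> norm (zvec (snd \<omega> a))})"
  have WS: "W i \<in> sets M" for i
  proof -
    have "{\<omega> \<in> space M. \<forall>k\<in>{min i (n-L)..min i (n-L)+L}. fst \<omega> (Inl k) = (0::nat)} \<in> sets M"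
      unfolding M_def using meas_N[of _ L0 Kl p \<theta>] by measurable
    then show ?thesis by (simp add: W_def M_def space_brw)
  qed
  have YS: "Y a \<in> sets M" for a
  proof -
    have "{\<omega> \<in> space M. Mx \<le> norm (zvec (snd \<omega> a))} \<in> sets M"
      unfolding M_def using meas_zY[of a L0 Kl p \<theta>] by measurable
    then show ?thesis by (simp add: Y_def M_def space_brw)
  qed
  have Wp: "measure M (W i) \<le> b ^ (L+1)" for i
    unfolding W_def M_def by (rule win_prob[OF b])
  have Yp: "measure M (Y a) \<le> E" for a
    unfolding Y_def M_def E_def Y_prob using markov_theta[OF mom q Mx] .
  have sub: "space M - good_event n \<epsilon> q \<subseteq> (\<Union>i\<in>{..n}. W i) \<union> ((\<Union>m\<in>{..<n}. Y (Inl m)) \<union> (\<Union>k\<in>{..n}. Y (Inr (k,0,[]))))"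
  proof
    fix \<omega> assume w: "\<omega> \<in> space M - good_event n \<epsilon> q"
    show "\<omega> \<in> (\<Union>i\<in>{..n}. W i) \<union> ((\<Union>m\<in>{..<n}. Y (Inl m)) \<union> (\<Union>k\<in>{..n}. Y (Inr (k,0,[]))))"
    proof (rule ccontr)
      assume "\<not> ?thesis"
      then have H1: "\<forall>i\<le>n. \<exists>k. min i (n-L) \<le> k \<and> k \<le> min i (n-L) + L \<and> fst \<omega> (Inl k) \<noteq> 0"
        and H2: "\<forall>m<n. norm (zvec (snd \<omega> (Inl m))) < Mx"
        and H3: "\<forall>k\<le>n. norm (zvec (snd \<omega> (Inr (k,0,[])))) < Mx"
        by (auto simp: W_def Y_def not_le Bex_def) (metis leD)+
      have "\<omega> \<in> good_event n \<epsilon> q" by (rule det[OF Ln H1 H2 H3 c])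
      with w show False by blast
    qed
  qed
  have "1 - measure M (good_event n \<epsilon> q) = measure M (space M - good_event n \<epsilon> q)"
    using prob_compl[of "good_event n \<epsilon> q"] good_meas[of n \<epsilon> q L0 Kl p \<theta>] by (simp add: M_def)
  also have "\<dots> \<le> measure M ((\<Union>i\<in>{..n}. W i) \<union> ((\<Union>m\<in>{..<n}. Y (Inl m)) \<union> (\<Union>k\<in>{..n}. Y (Inr (k,0,[])))))"
    using sub WS YS by (intro finite_measure_mono) auto
  also have "\<dots> \<le> measure M (\<Union>i\<in>{..n}. W i) + (measure M (\<Union>m\<in>{..<n}. Y (Inl m)) + measure M (\<Union>k\<in>{..n}. Y (Inr (k,0,[]))))"
  proof -
    have s1: "(\<Union>i\<in>{..n}. W i) \<in> sets M" "(\<Union>m\<in>{..<n}. Y (Inl m)) \<in> sets M" "(\<Union>k\<in>{..n}. Y (Inr (k,0,[]))) \<in> sets M"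
      using WS YS by auto
    show ?thesis
      using s1 by (intro order_trans[OF measure_subadditive] add_left_mono measure_subadditive) (auto simp: emeasure_finite)
  qed
  also have "\<dots> \<le> (\<Sum>i\<in>{..n}. measure M (W i)) + ((\<Sum>m\<in>{..<n}. measure M (Y (Inl m))) + (\<Sum>k\<in>{..n}. measure M (Y (Inr (k,0,[])))))"
    using WS YS by (intro add_mono finite_measure_subadditive_finite) auto
  also have "\<dots> \<le> (\<Sum>i\<in>{..n}. b ^ (L+1)) + ((\<Sum>m\<in>{..<n}. E) + (\<Sum>k\<in>{..n}. E))"
    using Wp Yp by (intro add_mono sum_mono) auto
  also have "\<dots> = real (n+1) * b ^ (L+1) + real (2*n+1) * E"
    by (simp add: algebra_simps)
  finally show ?thesis by (simp add: M_def E_def)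
qed


lemma conv_gen:
  fixes \<theta> :: "(int ^ 'd) pmf"
  assumes b: "\<forall>k. pmf (offspring_law L0 Kl p (Inl k)) 0 \<le> b" and b1: "b < 1"
    and mom: "integrable (measure_pmf \<theta>) (\<lambda>x. norm (zvec x) powr q)" and q: "q > 0" and eps: "\<epsilon> > 0"
  shows "(\<lambda>n. measure (brw_space L0 Kl p \<theta>) (good_event n \<epsilon> q)) \<longlonglongrightarrow> 1"
proof -
  define b' where "b' = max b (1/2)"
  have b'0: "0 < b'" and b'1: "b' < 1" using b1 by (auto simp: b'_def)
  have b': "\<forall>k. pmf (offspring_law L0 Kl p (Inl k)) 0 \<le> b'" using b unfolding b'_def by (meson le_max_iff_disj)
  define a where "a = - ln b'"
  have a: "a > 0" using b'0 b'1 by (simp add: a_def)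
  define \<delta> where "\<delta> = min \<epsilon> 1 / 2"
  have d0: "\<delta> > 0" and d1: "\<delta> \<le> 1" and d2: "2 * \<delta> \<le> \<epsilon>" using eps by (auto simp: \<delta>_def)
  define C where "C = measure_pmf.expectation \<theta> (\<lambda>x. norm (zvec x) powr q)"
  define f where "f = (\<lambda>n::nat. (real n + 1) * exp (- (real n powr \<delta> - 1) * a) + (2 * real n + 1) * C / real n powr (1 + \<delta> * q))"
  have f0: "f \<longlonglongrightarrow> 0"
  proof -
    have "(\<lambda>n::nat. (real n + 1) * exp (- (real n powr \<delta> - 1) * a)) \<longlonglongrightarrow> 0"
      using a d0 by real_asymp
    moreover have "(\<lambda>n::nat. (2 * real n + 1) * C / real n powr (1 + \<delta> * q)) \<longlonglongrightarrow> 0"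
      using d0 q by real_asymp
    ultimately show ?thesis unfolding f_def using tendsto_add[where b = 0 and a = 0] by simp
  qed
  have low: "1 - f n \<le> measure (brw_space L0 Kl p \<theta>) (good_event n \<epsilon> q)" if n: "n \<ge> 1" for n
  proof -
    define L where "L = nat \<lfloor>real n powr \<delta>\<rfloor> - 1"
    define Mx where "Mx = real n powr (1/q + \<delta>)"
    have Mx0: "Mx > 0" using n by (simp add: Mx_def)
    have pd1: "real n powr \<delta> \<ge> 1" using n d0 by (simp add: ge_one_powr_ge_zero)
    have pdn: "real n powr \<delta> \<le> real n" using powr_mono[of \<delta> 1 "real n"] n d1 by simp
    have fl: "\<lfloor>real n powr \<delta>\<rfloor> \<ge> 1" using pd1 by (simp add: le_floor_iff)
    have L1: "real L + 1 = real (nat \<lfloor>real n powr \<delta>\<rfloor>)"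
    proof -
      have "nat \<lfloor>real n powr \<delta>\<rfloor> \<ge> 1" using fl by linarith
      then show ?thesis unfolding L_def by (simp add: of_nat_diff)
    qed
    have L1': "real L + 1 \<le> real n powr \<delta>" unfolding L1 using pd1 by simp
    have L1'': "real L + 1 \<ge> real n powr \<delta> - 1" unfolding L1 using pd1 by linarith
    have Ln: "L \<le> n"
    proof -
      have "real L \<le> real n" using L1' pdn by linarith
      then show ?thesis by simp
    qed
    have c: "(real L + 1) * Mx \<le> real n powr (1/q+\<epsilon>)"
    proof -
      have "(real L + 1) * Mx \<le> real n powr \<delta> * Mx" using L1' Mx0 by (intro mult_right_mono) auto
      also have "\<dots> = real n powr (1/q + 2 * \<delta>)" unfolding Mx_def by (simp add: powr_add[symmetric] algebra_simps)
      also have "\<dots> \<le> real n powr (1/q+\<epsilon>)" using n d2 by (intro powr_mono) auto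
      finally show ?thesis .
    qed
    have "1 - measure (brw_space L0 Kl p \<theta>) (good_event n \<epsilon> q)
      \<le> real (n+1) * b' ^ (L+1) + real (2*n+1) * (C / Mx powr q)"
      unfolding C_def by (rule prob_bound[OF b' mom q Mx0 Ln c])
    also have "\<dots> \<le> f n"
    proof -
      have "b' ^ (L+1) = b' powr (real L + 1)" using b'0 powr_realpow[of b' "L+1"] by (simp add: add.commute)
      also have "\<dots> \<le> b' powr (real n powr \<delta> - 1)" using b'0 b'1 L1'' by (intro powr_mono') auto
      also have "\<dots> = exp (- (real n powr \<delta> - 1) * a)"
      proof -
        have "b' powr y = exp (- y * a)" for y using b'0 by (simp add: powr_def a_def)
        then show ?thesis .
      qed
      finally have 1: "b' ^ (L+1) \<le> exp (- (real n powr \<delta> - 1) * a)" .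
      have 2: "Mx powr q = real n powr (1 + \<delta> * q)" unfolding Mx_def using q by (simp add: powr_powr algebra_simps)
      have 3: "real (n+1) * b' ^ (L+1) \<le> (real n + 1) * exp (- (real n powr \<delta> - 1) * a)"
      proof -
        have e: "real (n+1) = real n + 1" by simp
        show ?thesis unfolding e by (rule mult_left_mono[OF 1]) simp
      qed
      have 4: "real (2*n+1) * (C / Mx powr q) = (2 * real n + 1) * C / real n powr (1 + \<delta> * q)"
        unfolding 2 by simp
      show ?thesis unfolding f_def 4 using 3 by linarith
    qed
    finally show ?thesis by linarith
  qed
  have up: "measure (brw_space L0 Kl p \<theta>) (good_event n \<epsilon> q) \<le> 1" for n
    using prob_space.prob_le_1[OF prob_brw] .
  have lim: "(\<lambda>n. 1 - f n) \<longlonglongrightarrow> 1" using tendsto_diff[OF tendsto_const f0, of 1] by simp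
  have ev1: "eventually (\<lambda>n. 1 - f n \<le> measure (brw_space L0 Kl p \<theta>) (good_event n \<epsilon> q)) sequentially"
    by (rule eventually_sequentiallyI[of 1]) (rule low)
  have ev2: "eventually (\<lambda>n. measure (brw_space L0 Kl p \<theta>) (good_event n \<epsilon> q) \<le> 1) sequentially"
    by (rule always_eventually) (rule allI, rule up)
  show ?thesis by (rule tendsto_sandwich[OF ev1 ev2 lim tendsto_const])
qed



lemma p0_pos:
  assumes mean: "measure_pmf.expectation p real = 1"
    and var: "measure_pmf.expectation p (\<lambda>i. real i ^ 2) - 1 > 0"
  shows "pmf p 0 > 0"
proof (rule ccontr)
  assume "\<not> pmf p 0 > 0"
  then have "pmf p 0 = 0" using pmf_nonneg[of p 0] by linarith
  then have "0 \<notin> set_pmf p" by (simp add: set_pmf_iff)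
  then have AE1: "AE x in measure_pmf p. 1 \<le> x" unfolding AE_measure_pmf_iff by (metis less_one not_le)
  have int: "integrable (measure_pmf p) real"
    using mean not_integrable_integral_eq[of "measure_pmf p" real] by fastforce
  have "measure_pmf.expectation p (\<lambda>x. real x - 1) = 0"
    using int mean by (simp add: Bochner_Integration.integral_diff)
  moreover have "integrable (measure_pmf p) (\<lambda>x. real x - 1)" using int by simp
  moreover have "AE x in measure_pmf p. 0 \<le> real x - 1" using AE1 by eventually_elim simp
  ultimately have "AE x in measure_pmf p. real x - 1 = 0"
    using integral_nonneg_eq_0_iff_AE by blast
  then have "AE x in measure_pmf p. real x ^ 2 = 1" by eventually_elim simp
  then have "measure_pmf.expectation p (\<lambda>i. real i ^ 2) = measure_pmf.expectation p (\<lambda>_. 1::real)"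
    by (intro integral_cong_AE) auto
  then show False using var by simp
qed

lemma p0_lt1:
  assumes mean: "measure_pmf.expectation p real = 1"
  shows "pmf p 0 < 1"
proof (rule ccontr)
  assume "\<not> pmf p 0 < 1"
  then have "measure_pmf.prob p {0} = 1" using pmf_le_1[of p 0] by (simp add: measure_pmf_single)
  then have "AE x in measure_pmf p. x \<in> {0}" by (subst (asm) measure_pmf.prob_eq_1) auto
  then have "AE x in measure_pmf p. real x = 0" by eventually_elim simp
  then have "measure_pmf.expectation p real = measure_pmf.expectation p (\<lambda>_. 0::real)"
    by (intro integral_cong_AE) auto
  then show False using mean by simp
qed

lemma Kl0:
  assumes Kl: "\<forall>j. pmf Kl j = measure_pmf.prob p {Suc j..}"
  shows "pmf Kl 0 = 1 - pmf p 0"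
proof -
  have e: "{Suc 0..} = space (measure_pmf p) - {0}" by auto
  have "measure_pmf.prob p {Suc 0..} = 1 - measure_pmf.prob p {0}"
    unfolding e by (rule measure_pmf.prob_compl) simp
  then show ?thesis using Kl by (simp add: measure_pmf_single)
qed

theorem mainTheorem10:
  fixes \<theta> :: "(int ^ 'd) pmf" and p Kl :: "nat pmf" and q \<epsilon> :: real
  assumes sym: "\<forall>x. pmf \<theta> (- x) = pmf \<theta> x"
    and gen: "\<forall>H. (0 \<in> H \<and> (\<forall>x\<in>H. \<forall>y\<in>H. x - y \<in> H) \<and> set_pmf \<theta> \<subseteq> H) \<longrightarrow> H = UNIV"
    and q: "q > 4"
    and mom: "integrable (measure_pmf \<theta>) (\<lambda>x. norm (zvec x) powr q)"
    and p2: "integrable (measure_pmf p) (\<lambda>i. real i ^ 2)"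
    and mean: "measure_pmf.expectation p real = 1"
    and var: "measure_pmf.expectation p (\<lambda>i. real i ^ 2) - 1 > 0"
    and Kl: "\<forall>j. pmf Kl j = measure_pmf.prob p {Suc j..}"
    and eps: "\<epsilon> > 0"
  shows "(\<lambda>n. measure (brw_space Kl Kl p \<theta>) (good_event n \<epsilon> q)) \<longlonglongrightarrow> 1
       \<and> (\<lambda>n. measure (brw_space p Kl p \<theta>) (good_event n \<epsilon> q)) \<longlonglongrightarrow> 1"
proof
  have a: "pmf p 0 > 0" by (rule p0_pos[OF mean var])
  have b: "pmf p 0 < 1" by (rule p0_lt1[OF mean])
  have c: "pmf Kl 0 = 1 - pmf p 0" by (rule Kl0[OF Kl])
  have q0: "q > 0" using q by simp
  show "(\<lambda>n. measure (brw_space Kl Kl p \<theta>) (good_event n \<epsilon> q)) \<longlonglongrightarrow> 1"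
  proof (rule conv_gen[OF _ _ mom q0 eps])
    show "\<forall>k. pmf (offspring_law Kl Kl p (Inl k)) 0 \<le> pmf Kl 0" by (simp add: offspring_law_def)
    show "pmf Kl 0 < 1" using a c by simp
  qed
  show "(\<lambda>n. measure (brw_space p Kl p \<theta>) (good_event n \<epsilon> q)) \<longlonglongrightarrow> 1"
  proof (rule conv_gen[OF _ _ mom q0 eps])
    show "\<forall>k. pmf (offspring_law p Kl p (Inl k)) 0 \<le> max (pmf p 0) (pmf Kl 0)" by (simp add: offspring_law_def)
    show "max (pmf p 0) (pmf Kl 0) < 1" using a b c by simp
  qed
qed

end
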